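(* Let $n\ge 1$. Write vectors of $\mathbb{R}^n$ as $x=(x_0,\dots,x_{n-1})$. Let $B:\mathbb{R}^n\times\mathbb{R}^n\to\mathbb{R}^{2n}$ be the symmetric bilinear map whose first component is $0$ and whose $(k+2)$-th component, for $k=0,1,\dots,2n-2$, is $\sum_{i+j=k} x_iy_j$ (sum over $0\le i,j\le n-1$). Let $C:\mathbb{R}^n\times\mathbb{R}^n\times\mathbb{R}^n\to\mathbb{R}^{2n}$ be the symmetric trilinear map $$C(x,y,z) = (x_0y_0z_0,\ x_1y_1z_1,\ \dots,\ x_{n-1}y_{n-1}z_{n-1},\ 0,\dots,0).$$ Define $f:\mathbb{R}^n\to\mathbb{R}^n\times\mathbb{R}^{2n}=\mathbb{R}^{3n}$ by $f(x) = \left(x,\ \tfrac12 B(x,x)+\tfrac16 C(x,x,x)\right)$. Then $f$ satisfies the local condition at $x=0$: every solution $(v_1,v_2,v_3,\lambda)\in\mathbb{R}^n\times\mathbb{R}^n\times\mathbb{R}^n\times\mathbb{R}$ of $Df_0(v_1)+D^2f_0(v_2,v_3)+\lambda D^3f_0(v_3,v_3,v_3)=0$ with $v_3\neq 0$ has $v_1=0$, $v_2=0$, $\lambda=0$.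
   Context: For a smooth $f:\mathbb{R}^n\to\mathbb{R}^N$ and $a\in\mathbb{R}^n$, $D^kf_a$ denotes the symmetric $k$-linear map $(\mathbb{R}^n)^k\to\mathbb{R}^N$ of $k$-th order partial derivatives, defined on the standard basis by $D^kf_a(e_{i_1},\dots,e_{i_k}) = \frac{\partial^k f}{\partial x_{i_1}\cdots\partial x_{i_k}}(a)$; $D^1f_a=Df_a$. *)

theory Defs
  imports "HOL-Analysis.Analysis"
begin

text \<open>Vectors of R^n are represented as functions nat => real; only the
components with index < n matter (a vector "in R^n" additionally has all
components with index >= n equal to 0).\<close>

definition pderiv_at :: "((nat \<Rightarrow> real) \<Rightarrow> real) \<Rightarrow> nat \<Rightarrow> (nat \<Rightarrow> real) \<Rightarrow> real" where
  "pderiv_at g i a = deriv (\<lambda>t. g (a(i := a i + t))) 0"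

fun iter_pderiv :: "((nat \<Rightarrow> real) \<Rightarrow> real) \<Rightarrow> nat list \<Rightarrow> (nat \<Rightarrow> real) \<Rightarrow> real" where
  "iter_pderiv g [] = g"
| "iter_pderiv g (i # is) = pderiv_at (iter_pderiv g is) i"

text \<open>D^k f_a(v_1,...,v_k) for f : R^n -> R^N: the k-linear map whose values on
standard basis vectors are the k-th order partial derivatives of f at a,
extended multilinearly.\<close>
definition Dk :: "nat \<Rightarrow> ((nat \<Rightarrow> real) \<Rightarrow> (nat \<Rightarrow> real)) \<Rightarrow> (nat \<Rightarrow> real)
                  \<Rightarrow> (nat \<Rightarrow> real) list \<Rightarrow> (nat \<Rightarrow> real)" where
  "Dk n f a vs = (\<lambda>m. \<Sum>is\<in>{is. set is \<subseteq> {..<n} \<and> length is = length vs}.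
       (\<Prod>j<length vs. (vs ! j) (is ! j)) * iter_pderiv (\<lambda>x. f x m) is a)"

text \<open>B : R^n x R^n -> R^{2n}, 0-based component c (c < 2n): component 0 is 0,
component k+1 (k = 0..2n-2) is sum_{i+j=k, i,j<n} x_i y_j.\<close>
definition Bmap :: "nat \<Rightarrow> (nat \<Rightarrow> real) \<Rightarrow> (nat \<Rightarrow> real) \<Rightarrow> (nat \<Rightarrow> real)" where
  "Bmap n x y = (\<lambda>c. if c = 0 \<or> c \<ge> 2 * n then 0
       else \<Sum>(i, j)\<in>{(i, j). i < n \<and> j < n \<and> i + j = c - 1}. x i * y j)"

definition Cmap :: "nat \<Rightarrow> (nat \<Rightarrow> real) \<Rightarrow> (nat \<Rightarrow> real) \<Rightarrow> (nat \<Rightarrow> real) \<Rightarrow> (nat \<Rightarrow> real)" where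
  "Cmap n x y z = (\<lambda>c. if c < n then x c * y c * z c else 0)"

text \<open>f : R^n -> R^n x R^{2n} = R^{3n}, f(x) = (x, B(x,x)/2 + C(x,x,x)/6);
output component m < n is x_m, component n + c (c < 2n) is the c-th component
of B(x,x)/2 + C(x,x,x)/6; components >= 3n are 0.\<close>
definition fmap :: "nat \<Rightarrow> (nat \<Rightarrow> real) \<Rightarrow> (nat \<Rightarrow> real)" where
  "fmap n x = (\<lambda>m. if m < n then x m
       else if m < 3 * n then Bmap n x x (m - n) / 2 + Cmap n x x x (m - n) / 6
       else 0)"

end

theory Submission
  imports Defs "HOL-Computational_Algebra.Polynomial"
begin

definition Pf :: "nat \<Rightarrow> real \<Rightarrow> (nat\<Rightarrow>real) \<Rightarrow> (nat\<Rightarrow>nat\<Rightarrow>real) \<Rightarrow> (nat\<Rightarrow>real) \<Rightarrow> (nat\<Rightarrow>real) \<Rightarrow> real" where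
"Pf n c0 L Q K x = c0 + (\<Sum>i<n. L i * x i) + (\<Sum>i<n. \<Sum>j<n. Q i j * x i * x j) + (\<Sum>i<n. K i * x i ^ 3)"

lemma ml1: "(if P then 1 else 0) * x = (if P then x else (0::real))" by simp
lemma ml2: "x * (if P then 1 else 0) = (if P then x else (0::real))" by simp
lemma ml3: "(if P then y else 0) * x = (if P then y * x else (0::real))" by simp
lemma ml4: "x * (if P then y else 0) = (if P then x * y else (0::real))" by simp
lemma sif: "(\<Sum>j\<in>A. if P then f j else 0) = (if P then sum f A else (0::real))" by auto

lemma pderiv_Pf:
  assumes "k < n"
  shows "pderiv_at (Pf n c0 L Q K) k = Pf n (L k) (\<lambda>j. Q k j + Q j k) (\<lambda>i j. if i=k \<and> j=k then 3*K k else 0) (\<lambda>_. 0)"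
proof
  fix a :: "nat \<Rightarrow> real"
  let ?d = "\<lambda>i. if i = k then 1 else (0::real)"
  have eq: "(\<lambda>t. Pf n c0 L Q K (a(k := a k + t))) = (\<lambda>t. c0 + (\<Sum>i<n. L i * (a i + ?d i * t))
     + (\<Sum>i<n. \<Sum>j<n. Q i j * (a i + ?d i * t) * (a j + ?d j * t)) + (\<Sum>i<n. K i * (a i + ?d i * t) ^ 3))"
  proof -
    have pt: "\<And>t i. (a(k := a k + t)) i = a i + ?d i * t" by simp
    show ?thesis unfolding Pf_def pt ..
  qed
  have D: "((\<lambda>t. Pf n c0 L Q K (a(k := a k + t))) has_real_derivative
     (\<Sum>i<n. L i * ?d i) + (\<Sum>i<n. \<Sum>j<n. Q i j * (?d i * a j + a i * ?d j)) + (\<Sum>i<n. K i * (3 * a i ^ 2 * ?d i))) (at 0)"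
    unfolding eq
    by (auto intro!: derivative_eq_intros simp: algebra_simps)
  have "(\<Sum>i<n. L i * ?d i) + (\<Sum>i<n. \<Sum>j<n. Q i j * (?d i * a j + a i * ?d j)) + (\<Sum>i<n. K i * (3 * a i ^ 2 * ?d i))
     = Pf n (L k) (\<lambda>j. Q k j + Q j k) (\<lambda>i j. if i=k \<and> j=k then 3*K k else 0) (\<lambda>_. 0) a"
  proof -
    have S1: "(\<Sum>i<n. L i * ?d i) = L k" using assms by (simp add: ml1 ml2 ml3 ml4 sif sum.delta cong: if_cong)
    have S2: "(\<Sum>i<n. \<Sum>j<n. Q i j * (?d i * a j + a i * ?d j)) = (\<Sum>j<n. (Q k j + Q j k) * a j)"
    proof -
      have "(\<Sum>i<n. \<Sum>j<n. Q i j * (?d i * a j + a i * ?d j)) = (\<Sum>i<n. \<Sum>j<n. Q i j * ?d i * a j) + (\<Sum>i<n. \<Sum>j<n. Q i j * a i * ?d j)"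
        by (simp add: algebra_simps sum.distrib)
      also have "(\<Sum>i<n. \<Sum>j<n. Q i j * ?d i * a j) = (\<Sum>j<n. Q k j * a j)"
        using assms by (simp add: ml1 ml2 ml3 ml4 sif sum.delta cong: if_cong)
      also have "(\<Sum>i<n. \<Sum>j<n. Q i j * a i * ?d j) = (\<Sum>i<n. Q i k * a i)"
        using assms by (simp add: ml1 ml2 ml3 ml4 sif sum.delta cong: if_cong)
      finally show ?thesis by (simp add: algebra_simps sum.distrib)
    qed
    have S3: "(\<Sum>i<n. K i * (3 * a i ^ 2 * ?d i)) = 3 * K k * a k * a k"
      using assms by (simp add: ml1 ml2 ml3 ml4 sif sum.delta power2_eq_square cong: if_cong)
    have S4: "(\<Sum>i<n. \<Sum>j<n. (if i=k \<and> j=k then 3*K k else 0) * a i * a j) = 3 * K k * a k * a k"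
    proof -
      have "(\<Sum>i<n. \<Sum>j<n. (if i=k \<and> j=k then 3*K k else 0) * a i * a j) = (\<Sum>i<n. if i = k then (\<Sum>j<n. (if j=k then 3*K k else 0) * a i * a j) else 0)"
        by (rule sum.cong) auto
      also have "\<dots> = 3 * K k * a k * a k" using assms by (simp add: sum.delta ml1 ml2 ml3 ml4 cong: if_cong)
      finally show ?thesis .
    qed
    show ?thesis unfolding S1 S2 S3 Pf_def S4 by simp
  qed
  then show "pderiv_at (Pf n c0 L Q K) k a = Pf n (L k) (\<lambda>j. Q k j + Q j k) (\<lambda>i j. if i=k \<and> j=k then 3*K k else 0) (\<lambda>_. 0) a"
    unfolding pderiv_at_def using DERIV_imp_deriv[OF D] by simp
qed



lemma Pf0: "Pf n c0 L Q K (\<lambda>_. 0) = c0" by (simp add: Pf_def)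

lemma iter1: "i < n \<Longrightarrow> iter_pderiv (Pf n c0 L Q K) [i] (\<lambda>_. 0) = L i"
  by (simp add: pderiv_Pf Pf0)
lemma iter2: "i < n \<Longrightarrow> j < n \<Longrightarrow> iter_pderiv (Pf n c0 L Q K) [i,j] (\<lambda>_. 0) = Q j i + Q i j"
  by (simp add: pderiv_Pf Pf0)
lemma iter3: "i < n \<Longrightarrow> j < n \<Longrightarrow> k < n \<Longrightarrow> iter_pderiv (Pf n c0 L Q K) [i,j,k] (\<lambda>_. 0) = (if i = k \<and> j = k then 6 * K k else 0)"
  by (simp add: pderiv_Pf Pf0)

lemma lists1: "{is. set is \<subseteq> {..<n} \<and> length is = length [v]} = (\<lambda>i. [i]) ` {..<n}"
  by (auto simp: length_Suc_conv)
lemma lists2: "{is. set is \<subseteq> {..<n} \<and> length is = length [v,w]} = (\<lambda>(i,j). [i,j]) ` ({..<n} \<times> {..<n})"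
  by (auto simp: length_Suc_conv)
lemma lists3: "{is. set is \<subseteq> {..<n} \<and> length is = length [u,v,w]} = (\<lambda>(i,j,k). [i,j,k]) ` ({..<n} \<times> {..<n} \<times> {..<n})"
  apply (auto simp: length_Suc_conv)
  subgoal for a b c by (rule image_eqI[where x="(a,b,c)"]) auto
  done

definition LL :: "nat \<Rightarrow> nat \<Rightarrow> nat \<Rightarrow> real" where "LL n m i = (if m < n \<and> i = m then 1 else 0)"
definition QQ :: "nat \<Rightarrow> nat \<Rightarrow> nat \<Rightarrow> nat \<Rightarrow> real" where
  "QQ n m i j = (if n \<le> m \<and> m - n \<noteq> 0 \<and> i + j = m - n - 1 then 1/2 else 0)"
definition KK :: "nat \<Rightarrow> nat \<Rightarrow> nat \<Rightarrow> real" where "KK n m i = (if n \<le> m \<and> m - n < n \<and> i = m - n then 1/6 else 0)"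

lemma pairsum: "(\<Sum>(i, j)\<in>{(i, j). i < (n::nat) \<and> j < n \<and> i + j = c}. g i j) = (\<Sum>i<n. \<Sum>j<n. if i + j = c then g i j else (0::real))"
proof -
  have "{(i, j). i < n \<and> j < n \<and> i + j = c} = Sigma {..<n} (\<lambda>i. {j\<in>{..<n}. i + j = c})" by auto
  have "(\<Sum>(i,j)\<in>Sigma {..<n} (\<lambda>i. {j\<in>{..<n}. i+j=c}). g i j) = (\<Sum>i<n. \<Sum>j\<in>{j\<in>{..<n}. i+j=c}. g i j)"
    by (subst sum.Sigma) auto
  also have "\<dots> = (\<Sum>i<n. \<Sum>j<n. if i + j = c then g i j else (0::real))"
    by (rule sum.cong[OF refl], rule sum.inter_filter) auto
  finally show ?thesis using \<open>{(i, j). i < n \<and> j < n \<and> i + j = c} = _\<close> by simp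
qed

lemma ml5: "(if P then 1/2 else 0) * x * y = (if P then x * y else 0) / (2::real)" by simp
lemma fmap_Pf: "m < 3 * n \<Longrightarrow> (\<lambda>x. fmap n x m) = Pf n 0 (LL n m) (QQ n m) (KK n m)"
proof
  fix x assume m: "m < 3 * n"
  show "fmap n x m = Pf n 0 (LL n m) (QQ n m) (KK n m) x"
  proof (cases "m < n")
    case True then show ?thesis by (simp add: fmap_def Pf_def LL_def QQ_def KK_def ml3 sum.delta)
  next
    case False
    have B: "Bmap n x x (m - n) / 2 = (\<Sum>i<n. \<Sum>j<n. QQ n m i j * x i * x j)"
    proof -
      have "(\<Sum>i<n. \<Sum>j<n. QQ n m i j * x i * x j) = (\<Sum>i<n. \<Sum>j<n. if m - n \<noteq> 0 \<and> i + j = m - n - 1 then x i * x j else 0) / 2"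
        using False by (simp add: QQ_def ml5 sum_divide_distrib)
      moreover have "Bmap n x x (m - n) = (\<Sum>i<n. \<Sum>j<n. if m - n \<noteq> 0 \<and> i + j = m - n - 1 then x i * x j else 0)"
        using False m by (auto simp: Bmap_def pairsum)
      ultimately show ?thesis by simp
    qed
    have C: "Cmap n x x x (m - n) / 6 = (\<Sum>i<n. KK n m i * x i ^ 3)"
      using False m by (auto simp: Cmap_def KK_def ml3 sum.delta power3_eq_cube)
    show ?thesis using False m B C by (simp add: fmap_def Pf_def LL_def)
  qed
qed




lemma D1: assumes m: "m < 3 * n" shows "Dk n (fmap n) (\<lambda>_. 0) [v] m = (if m < n then v m else 0)"
proof -
  have "Dk n (fmap n) (\<lambda>_. 0) [v] m = (\<Sum>is\<in>(\<lambda>i. [i]) ` {..<n}. (\<Prod>j<length [v]. ([v] ! j) (is ! j)) * iter_pderiv (Pf n 0 (LL n m) (QQ n m) (KK n m)) is (\<lambda>_. 0))"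
    unfolding Dk_def lists1 fmap_Pf[OF m] ..
  also have "\<dots> = (\<Sum>i<n. v i * LL n m i)"
    by (subst sum.reindex) (auto simp: inj_on_def pderiv_Pf Pf0 intro!: sum.cong)
  also have "\<dots> = (if m < n then v m else 0)"
    by (simp add: LL_def ml4 sum.delta)
  finally show ?thesis .
qed

lemma D2: assumes m: "m < 3 * n" shows "Dk n (fmap n) (\<lambda>_. 0) [v, w] m =
   (\<Sum>i<n. \<Sum>j<n. if n \<le> m \<and> m - n \<noteq> 0 \<and> i + j = m - n - 1 then v i * w j else 0)"
proof -
  have "Dk n (fmap n) (\<lambda>_. 0) [v, w] m = (\<Sum>is\<in>(\<lambda>(i,j). [i,j]) ` ({..<n} \<times> {..<n}). (\<Prod>j<length [v,w]. ([v,w] ! j) (is ! j)) * iter_pderiv (Pf n 0 (LL n m) (QQ n m) (KK n m)) is (\<lambda>_. 0))"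
    unfolding Dk_def lists2 fmap_Pf[OF m] ..
  also have "\<dots> = (\<Sum>(i,j)\<in>{..<n} \<times> {..<n}. v i * w j * (QQ n m j i + QQ n m i j))"
    by (subst sum.reindex) (auto simp: inj_on_def pderiv_Pf Pf0 intro!: sum.cong)
  also have "\<dots> = (\<Sum>i<n. \<Sum>j<n. v i * w j * (QQ n m j i + QQ n m i j))"
    by (simp add: sum.cartesian_product)
  also have "\<dots> = (\<Sum>i<n. \<Sum>j<n. if n \<le> m \<and> m - n \<noteq> 0 \<and> i + j = m - n - 1 then v i * w j else 0)"
    by (auto simp: QQ_def add.commute intro!: sum.cong)
  finally show ?thesis .
qed

lemma D3: assumes m: "m < 3 * n" shows "Dk n (fmap n) (\<lambda>_. 0) [v, v, v] m =
   (if n \<le> m \<and> m - n < n then v (m - n) ^ 3 else 0)"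
proof -
  have "Dk n (fmap n) (\<lambda>_. 0) [v, v, v] m = (\<Sum>is\<in>(\<lambda>(i,j,k). [i,j,k]) ` ({..<n} \<times> {..<n} \<times> {..<n}). (\<Prod>j<length [v,v,v]. ([v,v,v] ! j) (is ! j)) * iter_pderiv (Pf n 0 (LL n m) (QQ n m) (KK n m)) is (\<lambda>_. 0))"
    unfolding Dk_def lists3 fmap_Pf[OF m] ..
  also have "\<dots> = (\<Sum>(i,j,k)\<in>{..<n} \<times> {..<n} \<times> {..<n}. v i * v j * v k * (if i = k \<and> j = k then 6 * KK n m k else 0))"
    by (subst sum.reindex) (auto simp: inj_on_def pderiv_Pf Pf0 numeral_3_eq_3 intro!: sum.cong)
  also have "\<dots> = (\<Sum>i<n. \<Sum>j<n. \<Sum>k<n. v i * v j * v k * (if i = k \<and> j = k then 6 * KK n m k else 0))"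
    by (simp add: sum.cartesian_product)
  also have "\<dots> = (\<Sum>i<n. \<Sum>j<n. \<Sum>k<n. if k = i then (if j = i then v i ^ 3 * 6 * KK n m i else 0) else 0)"
  proof (rule sum.cong[OF refl], rule sum.cong[OF refl])
    fix i j assume "i \<in> {..<n}" "j \<in> {..<n}"
    show "(\<Sum>k<n. v i * v j * v k * (if i = k \<and> j = k then 6 * KK n m k else 0)) = (\<Sum>k<n. if k = i then (if j = i then v i ^ 3 * 6 * KK n m i else 0) else 0)"
      by (rule sum.cong) (auto simp: power3_eq_cube)
  qed
  also have "\<dots> = (\<Sum>i<n. v i ^ 3 * 6 * KK n m i)"
    by (simp add: sum.delta' sif)
  also have "\<dots> = (if n \<le> m \<and> m - n < n then v (m - n) ^ 3 else 0)"
    by (cases "n \<le> m \<and> m - n < n") (auto simp: KK_def ml4 sum.delta)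
  finally show ?thesis .
qed



lemma coeffP: assumes "\<forall>i\<ge>n. f i = 0" shows "coeff (Poly (map f [0..<n])) i = f i"
  using assms by (auto simp: nth_default_def)

lemma convlem:
  fixes f g :: "nat \<Rightarrow> real"
  assumes f: "\<forall>i\<ge>n. f i = 0" and g: "\<forall>i\<ge>n. g i = 0"
  shows "(\<Sum>i<n. \<Sum>j<n. if i + j = k then f i * g j else 0) = coeff (Poly (map f [0..<n]) * Poly (map g [0..<n])) k"
proof -
  have inner: "(\<Sum>j<n. if i + j = k then f i * g j else 0) = (if i \<le> k then f i * g (k - i) else 0)" for i
  proof -
    have "(\<Sum>j<n. if i + j = k then f i * g j else 0) = (\<Sum>j<n. if j = k - i then (if i \<le> k then f i * g j else 0) else 0)"
      by (rule sum.cong) auto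
    also have "\<dots> = (if i \<le> k then f i * g (k - i) else 0)"
      using g by (auto simp: sum.delta')
    finally show ?thesis .
  qed
  have "(\<Sum>i<n. \<Sum>j<n. if i + j = k then f i * g j else 0) = (\<Sum>i<n. if i \<in> {..k} then f i * g (k - i) else 0)"
    by (simp add: inner)
  also have "\<dots> = (\<Sum>i\<in>{..<n} \<inter> {..k}. f i * g (k - i))"
    by (simp add: sum.inter_restrict)
  also have "\<dots> = (\<Sum>i\<le>k. f i * g (k - i))"
    by (rule sum.mono_neutral_left) (use f in \<open>auto simp: not_less[symmetric]\<close>)
  also have "\<dots> = coeff (Poly (map f [0..<n]) * Poly (map g [0..<n])) k"
    by (simp only: coeff_mult coeffP[OF f] coeffP[OF g])
  finally show ?thesis .
qed

theorem theorem3p1: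
  fixes n :: nat and v1 v2 v3 :: "nat \<Rightarrow> real" and lam :: real
  assumes "n \<ge> 1"
    and "\<forall>i\<ge>n. v1 i = 0" and "\<forall>i\<ge>n. v2 i = 0" and "\<forall>i\<ge>n. v3 i = 0"
    and "\<forall>m<3 * n. Dk n (fmap n) (\<lambda>_. 0) [v1] m + Dk n (fmap n) (\<lambda>_. 0) [v2, v3] m
                     + lam * Dk n (fmap n) (\<lambda>_. 0) [v3, v3, v3] m = 0"
    and "v3 \<noteq> (\<lambda>_. 0)"
  shows "v1 = (\<lambda>_. 0) \<and> v2 = (\<lambda>_. 0) \<and> lam = 0"
proof -
  note h1 = assms(2) and h2 = assms(3) and h3 = assms(4)
  define p where "p = Poly (map v2 [0..<n])"
  define q where "q = Poly (map v3 [0..<n])"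
  define cv where "cv k = (\<Sum>i<n. \<Sum>j<n. if i + j = k then v2 i * v3 j else (0::real))" for k
  have cvp: "cv k = coeff (p * q) k" for k unfolding cv_def p_def q_def by (rule convlem[OF h2 h3])
  have E: "(if m < n then v1 m else 0) + (\<Sum>i<n. \<Sum>j<n. if n \<le> m \<and> m - n \<noteq> 0 \<and> i + j = m - n - 1 then v2 i * v3 j else 0)
     + lam * (if n \<le> m \<and> m - n < n then v3 (m - n) ^ 3 else 0) = 0" if "m < 3 * n" for m
    using assms(5) that by (simp add: D1 D2 D3)
  have v1z: "v1 = (\<lambda>_. 0)"
  proof
    fix m show "v1 m = 0"
    proof (cases "m < n")
      case True then show ?thesis using E[of m] by simp
    qed (use h1 in auto)
  qed
  have e0: "lam * v3 0 ^ 3 = 0" using E[of n] assms(1) by simp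
  have ec: "cv (c - 1) + lam * v3 c ^ 3 = 0" if "1 \<le> c" "c < n" for c
    using E[of "n + c"] that unfolding cv_def by simp
  have ed: "cv (c - 1) = 0" if "n \<le> c" "c < 2 * n" for c
    using E[of "n + c"] that unfolding cv_def by simp
  obtain j0 where j0: "v3 j0 \<noteq> 0" using assms(6) by auto
  have lz: "lam = 0"
  proof (rule ccontr)
    assume lne: "lam \<noteq> 0"
    define j1 where "j1 = (LEAST j. v3 j \<noteq> 0)"
    have j1: "v3 j1 \<noteq> 0" unfolding j1_def by (rule LeastI[of _ j0]) (rule j0)
    have lt: "j < j1 \<Longrightarrow> v3 j = 0" for j unfolding j1_def using not_less_Least by blast
    have "j1 \<noteq> 0" using e0 lne j1 by (metis power_eq_0_iff mult_eq_0_iff)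
    moreover have "j1 < n" using j1 h3 by (meson not_less)
    moreover have "cv (j1 - 1) = 0"
      unfolding cvp coeff_mult p_def q_def coeffP[OF h2] coeffP[OF h3]
      using \<open>j1 \<noteq> 0\<close> by (auto intro!: sum.neutral lt)
    ultimately have "lam * v3 j1 ^ 3 = 0" using ec[of j1] by simp
    then show False using lne j1 by simp
  qed
  have cz: "cv k = 0" for k
  proof -
    consider "k + 1 < n" | "n \<le> k + 1 \<and> k + 1 < 2 * n" | "2 * n \<le> k + 1" by linarith
    then show ?thesis
    proof cases
      case 1 then show ?thesis using ec[of "k+1"] lz by simp
    next
      case 2 then show ?thesis using ed[of "k+1"] by simp
    next
      case 3 then show ?thesis unfolding cv_def by (auto intro!: sum.neutral)
    qed
  qed
  have "p * q = 0" by (rule poly_eqI) (simp add: cvp[symmetric] cz)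
  moreover have "q \<noteq> 0"
  proof
    assume "q = 0"
    then have "coeff q j0 = 0" by simp
    then show False using j0 unfolding q_def coeffP[OF h3] by simp
  qed
  ultimately have "p = 0" by simp
  then have v2z: "v2 = (\<lambda>_. 0)"
    by (intro ext) (metis coeff_0 coeffP[OF h2] p_def)
  show ?thesis using v1z v2z lz by simp
qed

end
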